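(* Let $x,y$ be distinct odd primes with Legendre symbol $\left(\frac{x}{y}\right)=-1$. Then $x$ is balanced modulo $y$.
   Context: For positive integers $n,m$ with $\gcd(n,m)=1$, $n$ is said to be not balanced modulo $m$ iff there exists an odd Dirichlet character $\chi$ modulo $m$ (i.e. $\chi(-1)=-1$) such that $\chi(n)=1$ and $\sum_{0<k<m/2}\chi(k)\neq0$; otherwise $n$ is balanced modulo $m$. *)

theory Defs
  imports Complex_Main "HOL-Number_Theory.Number_Theory"
begin

definition dirichlet_character :: "nat \<Rightarrow> (int \<Rightarrow> complex) \<Rightarrow> bool" where
  "dirichlet_character m \<chi> \<longleftrightarrow>
     m > 0 \<and>
     (\<forall>a b. \<chi> (a * b) = \<chi> a * \<chi> b) \<and>
     (\<forall>a. \<chi> (a + int m) = \<chi> a) \<and>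
     (\<forall>a. \<chi> a = 0 \<longleftrightarrow> \<not> coprime a (int m))"

definition odd_character :: "(int \<Rightarrow> complex) \<Rightarrow> bool" where
  "odd_character \<chi> \<longleftrightarrow> \<chi> (-1) = -1"

definition half_sum :: "nat \<Rightarrow> (int \<Rightarrow> complex) \<Rightarrow> complex" where
  "half_sum m \<chi> = (\<Sum>k\<in>{k::nat. 0 < k \<and> 2 * k < m}. \<chi> (int k))"

definition not_balanced :: "nat \<Rightarrow> nat \<Rightarrow> bool" where
  "not_balanced n m \<longleftrightarrow>
     (\<exists>\<chi>. dirichlet_character m \<chi> \<and> odd_character \<chi> \<and> \<chi> (int n) = 1 \<and> half_sum m \<chi> \<noteq> 0)"

definition balanced :: "nat \<Rightarrow> nat \<Rightarrow> bool" where
  "balanced n m \<longleftrightarrow> \<not> not_balanced n m"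

end

theory Submission
  imports Defs
begin

lemma chi_period_nat:
  assumes "dirichlet_character m \<chi>"
  shows "\<chi> (a + int n * int m) = \<chi> a"
proof (induction n)
  case 0 then show ?case by simp
next
  case (Suc n)
  have "a + int (Suc n) * int m = (a + int n * int m) + int m" by (simp add: algebra_simps)
  moreover have "\<chi> ((a + int n * int m) + int m) = \<chi> (a + int n * int m)"
    using assms unfolding dirichlet_character_def by blast
  ultimately show ?case using Suc by (metis (no_types))
qed

lemma chi_cong:
  assumes "dirichlet_character m \<chi>" "[a = b] (mod int m)"
  shows "\<chi> a = \<chi> b"
proof -
  obtain k where k0: "b = a + int m * k"
    using assms(2) unfolding cong_iff_lin by blast
  then have k: "b = a + k * int m" by (simp add: mult.commute)
  show ?thesis
  proof (cases "k \<ge> 0")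
    case True
    then have "b = a + int (nat k) * int m" using k by simp
    then show ?thesis using chi_period_nat[OF assms(1), of a "nat k"] by simp
  next
    case False
    then have "a = b + int (nat (-k)) * int m" using k by simp
    then show ?thesis using chi_period_nat[OF assms(1), of b "nat (-k)"] by simp
  qed
qed

lemma chi_one:
  assumes "dirichlet_character m \<chi>"
  shows "\<chi> 1 = 1"
proof -
  have "\<chi> (1*1) = \<chi> 1 * \<chi> 1" using assms unfolding dirichlet_character_def by blast
  then have "\<chi> 1 = \<chi> 1 * \<chi> 1" by simp
  moreover have "\<chi> 1 \<noteq> 0" using assms unfolding dirichlet_character_def by simp
  ultimately show ?thesis by (metis mult_cancel_left1 mult.commute)
qed

lemma chi_pow:
  assumes "dirichlet_character m \<chi>"
  shows "\<chi> (a ^ k) = \<chi> a ^ k"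
proof (induction k)
  case 0 then show ?case using chi_one[OF assms] by simp
next
  case (Suc k) then show ?case using assms unfolding dirichlet_character_def by simp
qed

theorem lemma4p5:
  fixes x y :: nat
  assumes "prime x" and "prime y" and "odd x" and "odd y" and "x \<noteq> y"
    and "Legendre (int x) (int y) = -1"
  shows "balanced x y"
proof -
  have "y \<noteq> 2" using assms(4) by auto
  then have y2: "2 < y" using prime_ge_2_nat[OF assms(2)] by simp
  have py: "prime (int y)" using assms(2) by simp
  have e: "[-1 = int x ^ ((y - 1) div 2)] (mod int y)"
    using euler_criterion[OF assms(2) y2, of "int x"] assms(6) by simp
  show ?thesis unfolding balanced_def not_balanced_def
  proof
    assume "\<exists>\<chi>. dirichlet_character y \<chi> \<and> odd_character \<chi> \<and> \<chi> (int x) = 1 \<and> half_sum y \<chi> \<noteq> 0"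
    then obtain \<chi> where c: "dirichlet_character y \<chi>" "odd_character \<chi>" "\<chi> (int x) = 1" by blast
    have "\<chi> (-1) = \<chi> (int x ^ ((y - 1) div 2))" using chi_cong[OF c(1) e] .
    also have "\<dots> = 1" using chi_pow[OF c(1)] c(3) by simp
    finally show False using c(2) unfolding odd_character_def by simp
  qed
qed

end
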